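(* Let $n\ge2$ and let $H_{n,n}$ be the half-graph with vertex set $\{u_1,\dots,u_n\}\cup\{v_1,\dots,v_n\}$ in which $u_i$ is adjacent to $v_j$ exactly when $j\ge i$ (and there are no other edges). Then $\chi_{\mathrm{so}}(H_{n,n})=n+1$ and $\alpha_{\mathrm{od}}(H_{n,n})=2$, and every odd independent set of $H_{n,n}$ with at least two vertices has the form $\{v_i,u_j\}$ with $i<j$.
   Context: An odd independent set in $G=(V,E)$ is an independent set $S$ such that every $v\in V\setminus S$ has either no neighbor or an odd number of neighbors in $S$; $\alpha_{\mathrm{od}}(G)$ is its maximum size. A strong odd coloring is a proper coloring such that for each vertex $v$ every color on $N(v)$ occurs an odd number of times on $N(v)$; $\chi_{\mathrm{so}}(G)$ is the minimum number of colors. *)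

theory Defs
  imports Main
begin

text \<open>Finite simple graphs are given by a vertex set Vs and a symmetric
irreflexive adjacency relation E (only its restriction to Vs matters).\<close>

definition nbhd :: "'a set \<Rightarrow> ('a \<Rightarrow> 'a \<Rightarrow> bool) \<Rightarrow> 'a \<Rightarrow> 'a set" where
  "nbhd Vs E v = {w \<in> Vs. E v w}"

definition independent_set :: "'a set \<Rightarrow> ('a \<Rightarrow> 'a \<Rightarrow> bool) \<Rightarrow> 'a set \<Rightarrow> bool" where
  "independent_set Vs E S \<longleftrightarrow> S \<subseteq> Vs \<and> (\<forall>x\<in>S. \<forall>y\<in>S. \<not> E x y)"

definition odd_independent_set :: "'a set \<Rightarrow> ('a \<Rightarrow> 'a \<Rightarrow> bool) \<Rightarrow> 'a set \<Rightarrow> bool" where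
  "odd_independent_set Vs E S \<longleftrightarrow> independent_set Vs E S \<and>
     (\<forall>v \<in> Vs - S. card (nbhd Vs E v \<inter> S) = 0 \<or> odd (card (nbhd Vs E v \<inter> S)))"

definition alpha_od :: "'a set \<Rightarrow> ('a \<Rightarrow> 'a \<Rightarrow> bool) \<Rightarrow> nat" where
  "alpha_od Vs E = Max (card ` {S. odd_independent_set Vs E S})"

definition strong_odd_coloring :: "'a set \<Rightarrow> ('a \<Rightarrow> 'a \<Rightarrow> bool) \<Rightarrow> ('a \<Rightarrow> nat) \<Rightarrow> bool" where
  "strong_odd_coloring Vs E c \<longleftrightarrow>
     (\<forall>x\<in>Vs. \<forall>y\<in>Vs. E x y \<longrightarrow> c x \<noteq> c y) \<and>
     (\<forall>v\<in>Vs. \<forall>x\<in>nbhd Vs E v. odd (card {w \<in> nbhd Vs E v. c w = c x}))"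

definition chi_so :: "'a set \<Rightarrow> ('a \<Rightarrow> 'a \<Rightarrow> bool) \<Rightarrow> nat" where
  "chi_so Vs E = (LEAST k. \<exists>c. strong_odd_coloring Vs E c \<and> card (c ` Vs) = k)"

datatype hvert = U nat | V nat

definition half_vertices :: "nat \<Rightarrow> hvert set" where
  "half_vertices n = U ` {1..n} \<union> V ` {1..n}"

fun half_adj :: "hvert \<Rightarrow> hvert \<Rightarrow> bool" where
  "half_adj (U i) (V j) = (i \<le> j)"
| "half_adj (V j) (U i) = (i \<le> j)"
| "half_adj _ _ = False"

end

theory Submission
  imports Defs
begin

lemma fin_hv: "finite (half_vertices n)"
  by (simp add: half_vertices_def)

lemma nbhdU: "nbhd (half_vertices n) half_adj (U i) = V ` {l. 1 \<le> l \<and> l \<le> n \<and> i \<le> l}"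
  unfolding nbhd_def half_vertices_def
  by (auto elim: half_adj.elims)

lemma nbhdV: "nbhd (half_vertices n) half_adj (V j) = U ` {l. 1 \<le> l \<and> l \<le> n \<and> l \<le> j}"
  unfolding nbhd_def half_vertices_def
  by (auto elim: half_adj.elims)

lemma lower:
  assumes sc: "strong_odd_coloring (half_vertices n) half_adj c" and n1: "n \<ge> 1"
  shows "n + 1 \<le> card (c ` half_vertices n)"
proof -
  let ?Vs = "half_vertices n"
  let ?N = "\<lambda>i. nbhd ?Vs half_adj (U i)"
  have odd1: "\<And>v x. v \<in> ?Vs \<Longrightarrow> x \<in> nbhd ?Vs half_adj v \<Longrightarrow> odd (card {w \<in> nbhd ?Vs half_adj v. c w = c x})"
    using sc unfolding strong_odd_coloring_def by blast
  have key: "c (V i) \<noteq> c (V j)" if ij: "1 \<le> i" "i < j" "j \<le> n" for i j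
  proof
    assume eq: "c (V i) = c (V j)"
    have Ui: "U i \<in> ?Vs" "U (i+1) \<in> ?Vs" using ij by (auto simp: half_vertices_def)
    have Vi: "V i \<in> ?N i" "V j \<in> ?N (i+1)" "V i \<notin> ?N (i+1)" using ij by (auto simp: nbhdU)
    have o1: "odd (card {w \<in> ?N i. c w = c (V i)})" using odd1[OF Ui(1) Vi(1)] .
    have o2: "odd (card {w \<in> ?N (i+1). c w = c (V j)})" using odd1[OF Ui(2) Vi(2)] .
    have seteq: "{w \<in> ?N i. c w = c (V i)} = insert (V i) {w \<in> ?N (i+1). c w = c (V j)}"
      using ij eq by (auto simp: nbhdU)
    have fin: "finite {w \<in> ?N (i+1). c w = c (V j)}" by (simp add: nbhdU)
    have "card {w \<in> ?N i. c w = c (V i)} = Suc (card {w \<in> ?N (i+1). c w = c (V j)})"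
      unfolding seteq using fin Vi(3) by simp
    with o1 o2 show False by simp
  qed
  have inj: "inj_on c (V ` {1..n})"
  proof (rule inj_onI)
    fix x y assume "x \<in> V ` {1..n}" "y \<in> V ` {1..n}" "c x = c y"
    then obtain i j where "x = V i" "y = V j" "i \<in> {1..n}" "j \<in> {1..n}" "c (V i) = c (V j)" by auto
    then show "x = y" using key[of i j] key[of j i] by (cases i j rule: linorder_cases) auto
  qed
  have notin: "c (U 1) \<notin> c ` V ` {1..n}"
  proof
    assume "c (U 1) \<in> c ` V ` {1..n}"
    then obtain j where j: "j \<in> {1..n}" "c (U 1) = c (V j)" by auto
    have "U 1 \<in> ?Vs" "V j \<in> ?Vs" using j n1 by (auto simp: half_vertices_def)
    moreover have "half_adj (U 1) (V j)" using j by simp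
    ultimately show False using sc j unfolding strong_odd_coloring_def by blast
  qed
  have sub: "insert (U 1) (V ` {1..n}) \<subseteq> ?Vs" using n1 by (auto simp: half_vertices_def)
  have "card (c ` insert (U 1) (V ` {1..n})) = Suc (card (c ` V ` {1..n}))"
    using notin by simp
  also have "card (c ` V ` {1..n}) = n" 
  proof -
    have "card (c ` V ` {1..n}) = card (V ` {1..n})" by (rule card_image[OF inj])
    also have "\<dots> = card {1..n}" by (rule card_image) (simp add: inj_on_def)
    finally show ?thesis by simp
  qed
  finally have "card (c ` insert (U 1) (V ` {1..n})) = n + 1" by simp
  moreover have "card (c ` insert (U 1) (V ` {1..n})) \<le> card (c ` ?Vs)"
    by (rule card_mono) (use sub fin_hv in auto)
  ultimately show ?thesis by simp
qed

definition col :: "hvert \<Rightarrow> nat" where "col x = (case x of U i \<Rightarrow> i - 1 | V j \<Rightarrow> j)"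

lemma col_soc: "strong_odd_coloring (half_vertices n) half_adj col"
proof -
  have proper: "\<forall>x\<in>half_vertices n. \<forall>y\<in>half_vertices n. half_adj x y \<longrightarrow> col x \<noteq> col y"
    by (auto simp: half_vertices_def col_def)
  have single: "{w \<in> nbhd (half_vertices n) half_adj v. col w = col x} = {x}"
    if "v \<in> half_vertices n" "x \<in> nbhd (half_vertices n) half_adj v" for v x
    using that by (cases v) (auto simp: nbhdU nbhdV col_def)
  show ?thesis unfolding strong_odd_coloring_def using proper single by simp
qed

lemma col_card: assumes "n \<ge> 1" shows "card (col ` half_vertices n) = n + 1"
proof -
  have "col ` half_vertices n = (if n = 0 then {} else {0..n})"
  proof (cases "n = 0")
    case True then show ?thesis by (simp add: half_vertices_def)
  next
    case False
    have "col ` half_vertices n = (\<lambda>i. i - 1) ` {1..n} \<union> {1..n}"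
      by (simp add: half_vertices_def image_Un image_image col_def)
    also have "(\<lambda>i. i - 1) ` {1..n} = {0..n-1}"
    proof
      show "(\<lambda>i. i - 1) ` {1..n} \<subseteq> {0..n-1}" by auto
      show "{0..n-1} \<subseteq> (\<lambda>i. i - 1) ` {1..n}"
      proof
        fix k assume "k \<in> {0..n-1}"
        then have "Suc k \<in> {1..n}" "k = Suc k - 1" using False by auto
        then show "k \<in> (\<lambda>i. i - 1) ` {1..n}" by blast
      qed
    qed
    also have "{0..n-1} \<union> {1..n} = {0..n}" using False by auto
    finally show ?thesis using False by simp
  qed
  then show ?thesis using assms by simp
qed

lemma two_elems: "2 \<le> card (S::'a set) \<Longrightarrow> \<exists>x y. x \<in> S \<and> y \<in> S \<and> x \<noteq> y"
proof (rule ccontr)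
  assume c: "2 \<le> card S" and "\<not> (\<exists>x y. x \<in> S \<and> y \<in> S \<and> x \<noteq> y)"
  then have "\<forall>x\<in>S. \<forall>y\<in>S. x = y" by blast
  then have "card S \<le> Suc 0" by (cases "finite S") (auto simp: card_le_Suc0_iff_eq)
  with c show False by simp
qed

lemma card_sub_single: "X \<subseteq> {a} \<Longrightarrow> card X = 0 \<or> card X = 1"
  by (drule subset_singletonD) auto

lemma classify:
  assumes oi: "odd_independent_set (half_vertices n) half_adj S" and c2: "card S \<ge> 2"
  shows "\<exists>i j. i < j \<and> S = {V i, U j}"
proof -
  let ?Vs = "half_vertices n"
  have sub: "S \<subseteq> ?Vs" and indep: "\<And>x y. x \<in> S \<Longrightarrow> y \<in> S \<Longrightarrow> \<not> half_adj x y"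
    using oi unfolding odd_independent_set_def independent_set_def by auto
  have par: "\<And>v. v \<in> ?Vs - S \<Longrightarrow> card (nbhd ?Vs half_adj v \<inter> S) = 0 \<or> odd (card (nbhd ?Vs half_adj v \<inter> S))"
    using oi unfolding odd_independent_set_def by auto
  have oneU: "a = b" if "U a \<in> S" "U b \<in> S" for a b
  proof (rule ccontr)
    assume ne: "a \<noteq> b"
    define A where "A = {k. U k \<in> S}"
    have finA: "finite A"
    proof -
      have "A \<subseteq> {1..n}" using sub by (auto simp: A_def half_vertices_def)
      then show ?thesis using finite_subset by blast
    qed
    define a' where "a' = Min A"
    define b' where "b' = Min (A - {a'})"
    have aA: "a \<in> A" "b \<in> A" using that by (auto simp: A_def)
    have a'A: "a' \<in> A" unfolding a'_def using finA aA by (intro Min_in) auto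
    have ne2: "A - {a'} \<noteq> {}" using ne aA by auto
    have b'A: "b' \<in> A - {a'}" unfolding b'_def using finA ne2 by (intro Min_in) auto
    have "a' \<le> b'" using finA b'A by (simp add: a'_def)
    with b'A have ab: "a' < b'" by auto
    have only: "k = a' \<or> k = b'" if "k \<in> A" "k \<le> b'" for k
    proof (rule ccontr)
      assume "\<not> (k = a' \<or> k = b')"
      then have "k \<in> A - {a'}" "k \<noteq> b'" using that by auto
      then have "b' \<le> k" using finA by (simp add: b'_def)
      then show False using that \<open>k \<noteq> b'\<close> by simp
    qed
    have inVs: "U a' \<in> ?Vs" "U b' \<in> ?Vs" using a'A b'A sub by (auto simp: A_def)
    then have b'n: "1 \<le> b'" "b' \<le> n" "1 \<le> a'" by (auto simp: half_vertices_def)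
    have Vb: "V b' \<in> ?Vs - S"
      using b'n indep[of "U b'" "V b'"] b'A by (auto simp: A_def half_vertices_def)
    have "nbhd ?Vs half_adj (V b') \<inter> S = {U a', U b'}"
    proof
      show "nbhd ?Vs half_adj (V b') \<inter> S \<subseteq> {U a', U b'}"
        using only by (auto simp: nbhdV A_def)
      show "{U a', U b'} \<subseteq> nbhd ?Vs half_adj (V b') \<inter> S"
        using ab b'n a'A b'A by (auto simp: nbhdV A_def)
    qed
    then have "card (nbhd ?Vs half_adj (V b') \<inter> S) = 2" using ab by simp
    with par[OF Vb] show False by simp
  qed
  have oneV: "a = b" if "V a \<in> S" "V b \<in> S" for a b
  proof (rule ccontr)
    assume ne: "a \<noteq> b"
    define A where "A = {k. V k \<in> S}"
    have finA: "finite A"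
    proof -
      have "A \<subseteq> {1..n}" using sub by (auto simp: A_def half_vertices_def)
      then show ?thesis using finite_subset by blast
    qed
    define a' where "a' = Max A"
    define b' where "b' = Max (A - {a'})"
    have aA: "a \<in> A" "b \<in> A" using that by (auto simp: A_def)
    have a'A: "a' \<in> A" unfolding a'_def using finA aA by (intro Max_in) auto
    have ne2: "A - {a'} \<noteq> {}" using ne aA by auto
    have b'A: "b' \<in> A - {a'}" unfolding b'_def using finA ne2 by (intro Max_in) auto
    have "b' \<le> a'" using finA b'A by (simp add: a'_def)
    with b'A have ab: "b' < a'" by auto
    have only: "k = a' \<or> k = b'" if "k \<in> A" "b' \<le> k" for k
    proof (rule ccontr)
      assume "\<not> (k = a' \<or> k = b')"
      then have "k \<in> A - {a'}" "k \<noteq> b'" using that by auto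
      then have "k \<le> b'" using finA by (simp add: b'_def)
      then show False using that \<open>k \<noteq> b'\<close> by simp
    qed
    have inVs: "V a' \<in> ?Vs" "V b' \<in> ?Vs" using a'A b'A sub by (auto simp: A_def)
    then have b'n: "1 \<le> b'" "b' \<le> n" "a' \<le> n" by (auto simp: half_vertices_def)
    have Vb: "U b' \<in> ?Vs - S"
      using b'n indep[of "U b'" "V b'"] b'A by (auto simp: A_def half_vertices_def)
    have "nbhd ?Vs half_adj (U b') \<inter> S = {V a', V b'}"
    proof
      show "nbhd ?Vs half_adj (U b') \<inter> S \<subseteq> {V a', V b'}"
        using only by (auto simp: nbhdU A_def)
      show "{V a', V b'} \<subseteq> nbhd ?Vs half_adj (U b') \<inter> S"
        using ab b'n a'A b'A by (auto simp: nbhdU A_def)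
    qed
    then have "card (nbhd ?Vs half_adj (U b') \<inter> S) = 2" using ab by simp
    with par[OF Vb] show False by simp
  qed
  obtain x y where xy: "x \<in> S" "y \<in> S" "x \<noteq> y" using two_elems[OF c2] by blast
  have "\<exists>i j. V i \<in> S \<and> U j \<in> S"
    using xy oneU oneV by (cases x; cases y) auto
  then obtain i j where ij: "V i \<in> S" "U j \<in> S" by blast
  have "\<not> half_adj (U j) (V i)" using indep ij by blast
  then have "i < j" by simp
  moreover have "S = {V i, U j}"
  proof
    show "{V i, U j} \<subseteq> S" using ij by simp
    show "S \<subseteq> {V i, U j}"
    proof
      fix z assume "z \<in> S" then show "z \<in> {V i, U j}" using ij oneU oneV by (cases z) auto
    qed
  qed
  ultimately show ?thesis by blast
qed

lemma example_oi:
  assumes "n \<ge> 2" shows "odd_independent_set (half_vertices n) half_adj {V 1, U 2}"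
proof -
  have ind: "independent_set (half_vertices n) half_adj {V 1, U 2}"
    using assms by (auto simp: independent_set_def half_vertices_def)
  have "card (nbhd (half_vertices n) half_adj v \<inter> {V 1, U 2}) = 0 \<or>
        odd (card (nbhd (half_vertices n) half_adj v \<inter> {V 1, U 2}))" for v
  proof (cases v)
    case (U k)
    have "nbhd (half_vertices n) half_adj v \<inter> {V 1, U 2} \<subseteq> {V 1}" by (auto simp: U nbhdU)
    then show ?thesis using card_sub_single by fastforce
  next
    case (V k)
    have "nbhd (half_vertices n) half_adj v \<inter> {V 1, U 2} \<subseteq> {U 2}" by (auto simp: V nbhdV)
    then show ?thesis using card_sub_single by fastforce
  qed
  then show ?thesis using ind unfolding odd_independent_set_def by blast
qed

theorem proposition11:
  fixes n :: nat
  assumes "n \<ge> 2"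
  shows "chi_so (half_vertices n) half_adj = n + 1 \<and>
         alpha_od (half_vertices n) half_adj = 2 \<and>
         (\<forall>S. odd_independent_set (half_vertices n) half_adj S \<and> card S \<ge> 2 \<longrightarrow>
           (\<exists>i j. i < j \<and> S = {V i, U j}))"
proof (intro conjI)
  show "chi_so (half_vertices n) half_adj = n + 1"
    unfolding chi_so_def
  proof (rule Least_equality)
    show "\<exists>c. strong_odd_coloring (half_vertices n) half_adj c \<and> card (c ` half_vertices n) = n + 1"
      using col_soc[of n] col_card[of n] assms by (intro exI[of _ col]) auto
    show "n + 1 \<le> y" if "\<exists>c. strong_odd_coloring (half_vertices n) half_adj c \<and> card (c ` half_vertices n) = y" for y
    proof -
      from that obtain c where "strong_odd_coloring (half_vertices n) half_adj c" "card (c ` half_vertices n) = y" by blast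
      moreover have "n \<ge> 1" using assms by simp
      ultimately show ?thesis using lower by blast
    qed
  qed
  show cl: "\<forall>S. odd_independent_set (half_vertices n) half_adj S \<and> card S \<ge> 2 \<longrightarrow>
           (\<exists>i j. i < j \<and> S = {V i, U j})"
    using classify by blast
  show "alpha_od (half_vertices n) half_adj = 2"
    unfolding alpha_od_def
  proof (rule Max_eqI)
    have le: "card S \<le> 2" if oiS: "odd_independent_set (half_vertices n) half_adj S" for S
    proof (rule ccontr)
      assume "\<not> card S \<le> 2"
      then have "card S \<ge> 2" by simp
      then obtain i j where "i < j" "S = {V i, U j}" using classify[OF oiS] by blast
      then have "card S = 2" by simp
      with \<open>\<not> card S \<le> 2\<close> show False by simp
    qed
    then have "card ` {S. odd_independent_set (half_vertices n) half_adj S} \<subseteq> {0..2}" by auto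
    then show "finite (card ` {S. odd_independent_set (half_vertices n) half_adj S})"
      using finite_subset by blast
    show "y \<le> 2" if "y \<in> card ` {S. odd_independent_set (half_vertices n) half_adj S}" for y
      using that le by blast
    have "card {V 1, U 2} = 2" by simp
    then show "2 \<in> card ` {S. odd_independent_set (half_vertices n) half_adj S}"
      using example_oi[OF assms] by (metis (mono_tags) image_eqI mem_Collect_eq)
  qed
qed

end
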